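(* Let $n,m>3$ be integers and let $\psi$ be an automorphism of $\mathcal{CSR}(m,n)$. For every vertex $\xi$ of $\mathcal{CSR}(m,n)$ and every $a\neq b$ in $[m]$, there exist a vertex $\varsigma$ of $\mathcal{CSR}(m,n)$ and $p,q\in[m]$ (with $p\neq q$) such that $\psi(\xi+S_{ab})=\varsigma+S_{pq}$.
   Context: For positive integers $m,n$, the cyclic simplicial rook graph $\mathcal{CSR}(m,n)$ is the graph whose vertices are the vectors $(a_1,\dots,a_m)\in\mathbb{Z}_n^m$ with $a_1+\cdots+a_m\equiv 0 \pmod n$, two vertices being adjacent if and only if their vectors differ in exactly two coordinates. $[m]=\{1,\dots,m\}$; $e_i\in\mathbb{Z}_n^m$ is the vector with $1$ in coordinate $i$ and $0$ elsewhere; for distinct $a,b\in[m]$, $S_{ab}=\{\alpha(e_a-e_b)\mid \alpha\in\mathbb{Z}_n\}$; and $x+A=\{x+y\mid y\in A\}$. *)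

theory Defs
  imports Main
begin

text \<open>Vectors of Z_n^m are represented as functions nat => int, with coordinates
indexed by [m] = {1..m}, entries in {0..<n} (canonical representatives), and
value 0 outside [m].\<close>

definition zvec :: "nat \<Rightarrow> nat \<Rightarrow> (nat \<Rightarrow> int) set" where
  "zvec m n = {a. (\<forall>i\<in>{1..m}. a i \<in> {0..<int n}) \<and> (\<forall>i. i \<notin> {1..m} \<longrightarrow> a i = 0)}"

definition csr_verts :: "nat \<Rightarrow> nat \<Rightarrow> (nat \<Rightarrow> int) set" where
  "csr_verts m n = {a \<in> zvec m n. (\<Sum>i=1..m. a i) mod int n = 0}"

definition csr_adj :: "nat \<Rightarrow> (nat \<Rightarrow> int) \<Rightarrow> (nat \<Rightarrow> int) \<Rightarrow> bool" where
  "csr_adj m x y \<longleftrightarrow> card {i\<in>{1..m}. x i \<noteq> y i} = 2"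

definition csr_aut :: "nat \<Rightarrow> nat \<Rightarrow> ((nat \<Rightarrow> int) \<Rightarrow> (nat \<Rightarrow> int)) \<Rightarrow> bool" where
  "csr_aut m n \<psi> \<longleftrightarrow> bij_betw \<psi> (csr_verts m n) (csr_verts m n) \<and>
     (\<forall>x\<in>csr_verts m n. \<forall>y\<in>csr_verts m n. csr_adj m x y \<longleftrightarrow> csr_adj m (\<psi> x) (\<psi> y))"

definition vadd :: "nat \<Rightarrow> (nat \<Rightarrow> int) \<Rightarrow> (nat \<Rightarrow> int) \<Rightarrow> (nat \<Rightarrow> int)" where
  "vadd n x y = (\<lambda>i. (x i + y i) mod int n)"

definition unitv :: "nat \<Rightarrow> nat \<Rightarrow> int" where
  "unitv a = (\<lambda>i. if i = a then 1 else 0)"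

definition S_line :: "nat \<Rightarrow> nat \<Rightarrow> nat \<Rightarrow> (nat \<Rightarrow> int) set" where
  "S_line n a b = {(\<lambda>i. (\<alpha> * (unitv a i - unitv b i)) mod int n) | \<alpha>. \<alpha> \<in> {0..<int n}}"

definition vtrans :: "nat \<Rightarrow> (nat \<Rightarrow> int) \<Rightarrow> (nat \<Rightarrow> int) set \<Rightarrow> (nat \<Rightarrow> int) set" where
  "vtrans n x A = {vadd n x y | y. y \<in> A}"

end

theory Submission
  imports Defs
begin

definition dset :: "nat \<Rightarrow> (nat\<Rightarrow>int) \<Rightarrow> (nat\<Rightarrow>int) \<Rightarrow> nat set" where
  "dset m x y = {i\<in>{1..m}. x i \<noteq> y i}"

definition lineS :: "nat \<Rightarrow> nat \<Rightarrow> (nat\<Rightarrow>int) \<Rightarrow> nat set \<Rightarrow> (nat\<Rightarrow>int) set" where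
  "lineS m n x P = {y\<in>csr_verts m n. dset m x y \<subseteq> P}"

definition mk :: "nat \<Rightarrow> (nat\<Rightarrow>int) \<Rightarrow> nat \<Rightarrow> int \<Rightarrow> nat \<Rightarrow> (nat\<Rightarrow>int)" where
  "mk n x i v j = (\<lambda>k. if k = i then v else if k = j then (x j + x i - v) mod int n else x k)"

lemma adj_dset: "csr_adj m x y \<longleftrightarrow> card (dset m x y) = 2"
  by (simp add: csr_adj_def dset_def)

lemma dset_sym: "dset m x y = dset m y x"
  by (auto simp: dset_def)

lemma adj_sym: "csr_adj m x y \<longleftrightarrow> csr_adj m y x"
  by (simp add: adj_dset dset_sym)

lemma dset_tri: "dset m y z \<subseteq> dset m x y \<union> dset m x z"
  by (auto simp: dset_def)

lemma dset_tri2: "dset m x y - dset m x z \<subseteq> dset m y z"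
  by (auto simp: dset_def)

lemma dset_tri3: "dset m x z - dset m x y \<subseteq> dset m y z"
  by (auto simp: dset_def)

lemma verts_in: "x \<in> csr_verts m n \<Longrightarrow> i \<in> {1..m} \<Longrightarrow> 0 \<le> x i \<and> x i < int n"
  by (auto simp: csr_verts_def zvec_def)

lemma verts_out: "x \<in> csr_verts m n \<Longrightarrow> i \<notin> {1..m} \<Longrightarrow> x i = 0"
  by (auto simp: csr_verts_def zvec_def)

lemma verts_sum: "x \<in> csr_verts m n \<Longrightarrow> (\<Sum>i=1..m. x i) mod int n = 0"
  by (auto simp: csr_verts_def)

lemma vert_eq: "x \<in> csr_verts m n \<Longrightarrow> y \<in> csr_verts m n \<Longrightarrow> dset m x y = {} \<Longrightarrow> x = y"
proof (rule ext)
  fix i assume x: "x \<in> csr_verts m n" and y: "y \<in> csr_verts m n" and d: "dset m x y = {}"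
  show "x i = y i"
  proof (cases "i \<in> {1..m}")
    case True then show ?thesis using d by (auto simp: dset_def)
  next
    case False then show ?thesis using verts_out[OF x] verts_out[OF y] by auto
  qed
qed

lemma sum_one_change:
  fixes f g :: "nat \<Rightarrow> int"
  assumes "finite A" "i \<in> A" "\<forall>k\<in>A. k \<noteq> i \<longrightarrow> f k = g k"
  shows "sum f A = sum g A + (f i - g i)"
proof -
  have "sum f A = f i + sum f (A - {i})" using assms by (simp add: sum.remove)
  moreover have "sum g A = g i + sum g (A - {i})" using assms by (simp add: sum.remove)
  moreover have "sum f (A - {i}) = sum g (A - {i})" using assms by (intro sum.cong) auto
  ultimately show ?thesis by simp
qed

lemma sum_two_change:
  fixes f g :: "nat \<Rightarrow> int"
  assumes "finite A" "i \<in> A" "j \<in> A" "i \<noteq> j" "\<forall>k\<in>A. k \<noteq> i \<longrightarrow> k \<noteq> j \<longrightarrow> f k = g k"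
  shows "sum f A = sum g A + (f i - g i) + (f j - g j)"
proof -
  define h where "h = g(i := f i)"
  have 1: "sum f A = sum h A + (f j - h j)"
    using assms by (intro sum_one_change) (auto simp: h_def)
  have 2: "sum h A = sum g A + (h i - g i)"
    using assms by (intro sum_one_change) (auto simp: h_def)
  show ?thesis using 1 2 assms by (simp add: h_def)
qed

lemma mod_eq_range: "0 \<le> (a::int) \<Longrightarrow> a < n \<Longrightarrow> 0 \<le> b \<Longrightarrow> b < n \<Longrightarrow> a mod n = b mod n \<Longrightarrow> a = b"
  by simp

lemma no_single:
  assumes x: "x \<in> csr_verts m n" and y: "y \<in> csr_verts m n" and d: "dset m x y = {i}"
  shows False
proof -
  have "i \<in> dset m x y" using d by simp
  then have i: "i \<in> {1..m}" "x i \<noteq> y i" unfolding dset_def by auto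
  have "\<forall>k\<in>{1..m}. k \<noteq> i \<longrightarrow> y k = x k"
  proof (intro ballI impI)
    fix k assume k: "k \<in> {1..m}" "k \<noteq> i"
    then have "k \<notin> dset m x y" using d by simp
    then show "y k = x k" using k unfolding dset_def by auto
  qed
  then have s: "(\<Sum>k=1..m. y k) = (\<Sum>k=1..m. x k) + (y i - x i)"
    using i by (intro sum_one_change) auto
  have "(y i - x i) mod int n = 0"
  proof -
    have "((\<Sum>k=1..m. x k) + (y i - x i)) mod int n = 0" using s verts_sum[OF y] by simp
    moreover have "((\<Sum>k=1..m. x k) + (y i - x i)) mod int n = ((\<Sum>k=1..m. x k) mod int n + (y i - x i)) mod int n"
      by (simp add: mod_add_left_eq)
    ultimately show ?thesis using verts_sum[OF x] by simp
  qed
  then have "x i mod int n = y i mod int n" by (metis dvd_diff_commute mod_0_imp_dvd mod_eq_dvd_iff)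
  then have "x i = y i" using verts_in[OF x i(1)] verts_in[OF y i(1)] by simp
  then show False using i by simp
qed

lemma sub2_cases: "S \<subseteq> {p,q} \<Longrightarrow> S = {} \<or> S = {p} \<or> S = {q} \<or> S = {p,q}"
  by blast

lemma adj_of_sub:
  assumes x: "x \<in> csr_verts m n" and y: "y \<in> csr_verts m n" and ne: "x \<noteq> y"
    and sub: "dset m x y \<subseteq> {p,q}" and pq: "p \<noteq> q"
  shows "csr_adj m x y"
proof -
  have "dset m x y \<noteq> {}" using vert_eq[OF x y] ne by blast
  moreover have "dset m x y \<noteq> {p}" "dset m x y \<noteq> {q}" using no_single[OF x y] by blast+
  ultimately have "dset m x y = {p,q}" using sub2_cases[OF sub] by blast
  then show ?thesis using pq by (simp add: adj_dset)
qed

lemma card2_finite: "card S = 2 \<Longrightarrow> finite S"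
  by (rule card_ge_0_finite) simp

lemma two_elems:
  assumes S: "card S = 2" and a: "a \<in> S" and b: "b \<in> S" and ab: "a \<noteq> b"
  shows "S = {a,b}"
proof -
  obtain p1 p2 where p: "S = {p1,p2}" "p1 \<noteq> p2" using S unfolding card_2_iff by blast
  show ?thesis using p a b ab by blast
qed

lemma other_elem:
  assumes S: "card S = 2" and b: "b \<in> S"
  shows "\<exists>a. a \<noteq> b \<and> S = {a,b}"
proof -
  obtain p1 p2 where p: "S = {p1,p2}" "p1 \<noteq> p2" using S unfolding card_2_iff by blast
  show ?thesis
  proof (cases "b = p1")
    case True then show ?thesis using p by (intro exI[of _ p2]) auto
  next
    case False then have "b = p2" using p b by blast
    then show ?thesis using p by (intro exI[of _ p1]) auto
  qed
qed

lemma tri_abs: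
  assumes P: "card P = 2" and Q: "card Q = 2" and R: "card R = 2"
    and RPQ: "R \<subseteq> P \<union> Q" and PQ: "P - Q \<subseteq> R" and QP: "Q - P \<subseteq> R"
  shows "(P = Q \<and> R = P) \<or> (\<exists>a b c. a\<noteq>b \<and> a\<noteq>c \<and> b\<noteq>c \<and> P = {a,b} \<and> Q = {a,c} \<and> R = {b,c})"
proof (cases "P = Q")
  case True
  then have "R \<subseteq> P" using RPQ by simp
  moreover have "finite P" using P by (rule card2_finite)
  ultimately have "R = P" using P R card_subset_eq[of P R] by simp
  then show ?thesis using True by simp
next
  case False
  have fP: "finite P" using P by (rule card2_finite)
  have fQ: "finite Q" using Q by (rule card2_finite)
  have "\<not> P \<subseteq> Q"
  proof
    assume "P \<subseteq> Q" then have "P = Q" using card_subset_eq[OF fQ] P Q by simp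
    then show False using False by simp
  qed
  then obtain b where b: "b \<in> P" "b \<notin> Q" by blast
  have "\<not> Q \<subseteq> P"
  proof
    assume "Q \<subseteq> P" then have "Q = P" using card_subset_eq[OF fP] P Q by simp
    then show False using False by simp
  qed
  then obtain c where c: "c \<in> Q" "c \<notin> P" by blast
  have bc: "b \<noteq> c" using b c by blast
  have bR: "b \<in> R" and cR: "c \<in> R" using b c PQ QP by blast+
  have Rbc: "R = {b,c}" by (rule two_elems[OF R bR cR bc])
  obtain a where a: "P = {a,b}" "a \<noteq> b" using other_elem[OF P b(1)] by blast
  have "a \<in> Q"
  proof (rule ccontr)
    assume "a \<notin> Q"
    then have "a \<in> R" using a PQ by blast
    then show False using Rbc a c by blast
  qed
  have ac: "a \<noteq> c" using a c by blast
  have Qac: "Q = {a,c}" by (rule two_elems[OF Q \<open>a \<in> Q\<close> c(1) ac])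
  show ?thesis
    by (rule disjI2, rule exI[of _ a], rule exI[of _ b], rule exI[of _ c]) (simp add: a Qac Rbc bc ac)
qed

lemma tri:
  assumes "csr_adj m x y" "csr_adj m x z" "csr_adj m y z"
  shows "(dset m x y = dset m x z \<and> dset m y z = dset m x y) \<or>
    (\<exists>a b c. a\<noteq>b \<and> a\<noteq>c \<and> b\<noteq>c \<and> dset m x y = {a,b} \<and> dset m x z = {a,c} \<and> dset m y z = {b,c})"
proof -
  have c: "card (dset m x y) = 2" "card (dset m x z) = 2" "card (dset m y z) = 2"
    using assms by (simp_all add: adj_dset)
  show ?thesis by (rule tri_abs[OF c dset_tri[of m y z x] dset_tri2[of m x y z] dset_tri3[of m x z y]])
qed

lemma mk_i: "mk n x i v j i = v" by (simp add: mk_def)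
lemma mk_j: "i \<noteq> j \<Longrightarrow> mk n x i v j j = (x j + x i - v) mod int n" by (simp add: mk_def)
lemma mk_o: "k \<noteq> i \<Longrightarrow> k \<noteq> j \<Longrightarrow> mk n x i v j k = x k" by (simp add: mk_def)

lemma mk_vert:
  assumes x: "x \<in> csr_verts m n" and i: "i \<in> {1..m}" and j: "j \<in> {1..m}" and ij: "i \<noteq> j"
    and v: "0 \<le> v" "v < int n"
  shows "mk n x i v j \<in> csr_verts m n"
proof -
  have n: "int n > 0" using v by linarith
  let ?w = "mk n x i v j"
  have z: "?w \<in> zvec m n"
    unfolding zvec_def using verts_in[OF x] verts_out[OF x] i j ij v n
    by (auto simp: mk_def)
  define B where "B = x j + x i - v"
  have s: "(\<Sum>k=1..m. ?w k) = (\<Sum>k=1..m. x k) + (?w i - x i) + (?w j - x j)"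
    using i j ij by (intro sum_two_change) (auto simp: mk_def)
  also have "\<dots> = (\<Sum>k=1..m. x k) + (B mod int n - B)"
    using ij by (simp add: mk_def B_def)
  also have "\<dots> = (\<Sum>k=1..m. x k) + int n * (- (B div int n))"
    by (simp add: minus_div_mult_eq_mod [symmetric] algebra_simps)
  finally have "(\<Sum>k=1..m. ?w k) = (\<Sum>k=1..m. x k) + int n * (- (B div int n))" .
  then have "(\<Sum>k=1..m. ?w k) mod int n = (\<Sum>k=1..m. x k) mod int n"
    by (simp only: mod_mult_self2)
  then show ?thesis using z verts_sum[OF x] by (simp add: csr_verts_def)
qed

lemma mk_dset_sub: "dset m x (mk n x i v j) \<subseteq> {i,j}"
  by (auto simp: dset_def mk_def)

lemma mk_j_neq:
  assumes x: "x \<in> csr_verts m n" and i: "i \<in> {1..m}" and j: "j \<in> {1..m}" and ij: "i \<noteq> j"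
    and v: "0 \<le> v" "v < int n" and vx: "v \<noteq> x i"
  shows "mk n x i v j j \<noteq> x j"
proof
  assume "mk n x i v j j = x j"
  then have "(x j + x i - v) mod int n = x j" using ij by (simp add: mk_def)
  then have "(x j + x i - v) mod int n = x j mod int n" using verts_in[OF x j] by simp
  then have "int n dvd (x j + x i - v - x j)" by (simp only: mod_eq_dvd_iff)
  then have "int n dvd (x i - v)" by simp
  then have "x i mod int n = v mod int n" by (simp only: mod_eq_dvd_iff)
  then show False using verts_in[OF x i] v vx by simp
qed

lemma lineS_verts: "lineS m n x P \<subseteq> csr_verts m n"
  by (auto simp: lineS_def)

lemma lineS_dset: "y \<in> lineS m n x P \<Longrightarrow> dset m x y \<subseteq> P"
  by (auto simp: lineS_def)

lemma lineS_I: "y \<in> csr_verts m n \<Longrightarrow> dset m x y \<subseteq> P \<Longrightarrow> y \<in> lineS m n x P"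
  by (auto simp: lineS_def)

lemma line_clique:
  assumes "u \<in> lineS m n x {p,q}" "v \<in> lineS m n x {p,q}" "u \<noteq> v" "p \<noteq> q"
  shows "csr_adj m u v"
proof -
  have "dset m u v \<subseteq> {p,q}" using dset_tri[of m u v x] lineS_dset[OF assms(1)] lineS_dset[OF assms(2)]
    by (auto simp: dset_sym)
  then show ?thesis using adj_of_sub assms lineS_verts by blast
qed

lemma sub_card2_eq: "S \<subseteq> {p,q} \<Longrightarrow> card S = 2 \<Longrightarrow> S = {p,q}"
proof (cases "p = q")
  case True
  assume "S \<subseteq> {p,q}" "card S = 2"
  then show ?thesis using True card_mono[of "{q}" S] by simp
next
  case False
  assume "S \<subseteq> {p,q}" "card S = 2"
  then show ?thesis using False card_subset_eq[of "{p,q}" S] by simp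
qed

lemma line_dset_eq:
  assumes "u \<in> lineS m n x {p,q}" "v \<in> lineS m n x {p,q}" "u \<noteq> v" "p \<noteq> q"
  shows "dset m u v = {p,q}"
proof -
  have "dset m u v \<subseteq> {p,q}" using dset_tri[of m u v x] lineS_dset[OF assms(1)] lineS_dset[OF assms(2)]
    by (auto simp: dset_sym)
  moreover have "card (dset m u v) = 2" using line_clique[OF assms] by (simp add: adj_dset)
  ultimately show ?thesis by (rule sub_card2_eq)
qed

lemma line_U:
  assumes pq: "p \<noteq> q"
    and y1: "y1 \<in> lineS m n x {p,q}" and y2: "y2 \<in> lineS m n x {p,q}" and y3: "y3 \<in> lineS m n x {p,q}"
    and d: "y1 \<noteq> y2" "y1 \<noteq> y3" "y2 \<noteq> y3"
    and v: "v \<in> csr_verts m n" and a1: "csr_adj m v y1" and a2: "csr_adj m v y2" and a3: "csr_adj m v y3"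
  shows "v \<in> lineS m n x {p,q}"
proof -
  have d12: "dset m y1 y2 = {p,q}" by (rule line_dset_eq[OF y1 y2 d(1) pq])
  have d13: "dset m y1 y3 = {p,q}" by (rule line_dset_eq[OF y1 y3 d(2) pq])
  have d23: "dset m y2 y3 = {p,q}" by (rule line_dset_eq[OF y2 y3 d(3) pq])
  have b1: "csr_adj m y1 v" "csr_adj m y2 v" "csr_adj m y3 v" using a1 a2 a3 adj_sym by blast+
  have "dset m y1 v = {p,q}"
  proof -
    from tri[OF line_clique[OF y1 y2 d(1) pq] b1(1) b1(2)]
    show ?thesis
    proof
      assume "dset m y1 y2 = dset m y1 v \<and> dset m y2 v = dset m y1 y2"
      then show ?thesis using d12 by simp
    next
      assume "\<exists>a b c. a \<noteq> b \<and> a \<noteq> c \<and> b \<noteq> c \<and> dset m y1 y2 = {a, b} \<and> dset m y1 v = {a, c} \<and> dset m y2 v = {b, c}"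
      then obtain a b c where abc: "a \<noteq> b" "a \<noteq> c" "b \<noteq> c" "dset m y1 y2 = {a, b}" "dset m y1 v = {a, c}" "dset m y2 v = {b, c}"
        by blast
      have "dset m y3 v = {b,c}"
      proof -
        from tri[OF line_clique[OF y1 y3 d(2) pq] b1(1) b1(3)]
        show ?thesis
        proof
          assume "dset m y1 y3 = dset m y1 v \<and> dset m y3 v = dset m y1 y3"
          then have "{a,b} = {a,c}" using d12 d13 abc by simp
          then show ?thesis using abc by (auto simp: doubleton_eq_iff)
        next
          assume "\<exists>a b c. a \<noteq> b \<and> a \<noteq> c \<and> b \<noteq> c \<and> dset m y1 y3 = {a, b} \<and> dset m y1 v = {a, c} \<and> dset m y3 v = {b, c}"
          then obtain a' b' c' where abc': "a' \<noteq> b'" "a' \<noteq> c'" "b' \<noteq> c'" "dset m y1 y3 = {a', b'}" "dset m y1 v = {a', c'}" "dset m y3 v = {b', c'}"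
            by blast
          have e1: "{a',b'} = {a,b}" using abc'(4) d13 d12 abc(4) by simp
          have e2: "{a',c'} = {a,c}" using abc'(5) abc(5) by simp
          have "a' = a \<and> b' = b \<and> c' = c" using e1 e2 abc abc' by (auto simp: doubleton_eq_iff)
          then show ?thesis using abc' by simp
        qed
      qed
      from tri[OF adj_sym[THEN iffD1, OF b1(2)] adj_sym[THEN iffD1, OF b1(3)] line_clique[OF y2 y3 d(3) pq]]
      have False
      proof
        assume "dset m v y2 = dset m v y3 \<and> dset m y2 y3 = dset m v y2"
        then have "{p,q} = {b,c}" using d23 abc dset_sym by metis
        then have "{a,b} = {b,c}" using d12 abc by simp
        then show False using abc by (auto simp: doubleton_eq_iff)
      next
        assume "\<exists>a b c. a \<noteq> b \<and> a \<noteq> c \<and> b \<noteq> c \<and> dset m v y2 = {a, b} \<and> dset m v y3 = {a, c} \<and> dset m y2 y3 = {b, c}"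
        then obtain a' b' c' where "b' \<noteq> c'" "dset m v y2 = {a', b'}" "dset m v y3 = {a', c'}"
          by blast
        moreover have "dset m v y2 = dset m v y3" using abc(6) \<open>dset m y3 v = {b,c}\<close> dset_sym by metis
        ultimately show False by (auto simp: doubleton_eq_iff)
      qed
      then show ?thesis by simp
    qed
  qed
  then have "dset m x v \<subseteq> {p,q}" using dset_tri[of m x v y1] lineS_dset[OF y1] by (auto simp: dset_sym)
  then show ?thesis using v by (rule lineS_I[rotated])
qed

definition good :: "nat \<Rightarrow> nat \<Rightarrow> (nat\<Rightarrow>int) set \<Rightarrow> bool" where
  "good m n C \<longleftrightarrow> C \<subseteq> csr_verts m n \<and> (\<forall>u\<in>C. \<forall>v\<in>C. u \<noteq> v \<longrightarrow> csr_adj m u v) \<and>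
    (\<forall>v\<in>csr_verts m n. \<forall>y1\<in>C. \<forall>y2\<in>C. \<forall>y3\<in>C. y1 \<noteq> y2 \<and> y1 \<noteq> y3 \<and> y2 \<noteq> y3 \<and>
        csr_adj m v y1 \<and> csr_adj m v y2 \<and> csr_adj m v y3 \<longrightarrow> v \<in> C) \<and>
    (\<exists>y1\<in>C. \<exists>y2\<in>C. \<exists>y3\<in>C. y1 \<noteq> y2 \<and> y1 \<noteq> y3 \<and> y2 \<noteq> y3)"

lemma mod_small_neq:
  fixes a :: int assumes "0 \<le> a" "a < n" "n \<ge> 3" "0 \<le> k" "k < l" "l < 3"
  shows "(a + k) mod n \<noteq> (a + l) mod n"
proof
  assume "(a + k) mod n = (a + l) mod n"
  then have "n dvd (a + k - (a + l))" by (simp only: mod_eq_dvd_iff)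
  then have "n dvd (l - k)" by (metis dvd_minus_iff minus_diff_eq add_diff_cancel_left)
  moreover have "0 < l - k" "l - k < n" using assms by linarith+
  ultimately show False using zdvd_imp_le by fastforce
qed

lemma good_line:
  assumes x: "x \<in> csr_verts m n" and p: "p \<in> {1..m}" and q: "q \<in> {1..m}" and pq: "p \<noteq> q" and n: "n \<ge> 3"
  shows "good m n (lineS m n x {p,q})"
proof -
  let ?L = "lineS m n x {p,q}"
  have xr: "0 \<le> x p" "x p < int n" using verts_in[OF x p] by auto
  define w1 where "w1 = mk n x p ((x p + 1) mod int n) q"
  define w2 where "w2 = mk n x p ((x p + 2) mod int n) q"
  have np: "int n > 0" using n by simp
  have w1: "w1 \<in> ?L" unfolding w1_def
    by (rule lineS_I[OF mk_vert[OF x p q pq] mk_dset_sub]) (use np in auto)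
  have w2: "w2 \<in> ?L" unfolding w2_def
    by (rule lineS_I[OF mk_vert[OF x p q pq] mk_dset_sub]) (use np in auto)
  have x1: "x \<in> ?L" using x by (auto intro!: lineS_I simp: dset_def)
  have nn: "int n \<ge> 3" using n by simp
  have e0: "x p = (x p + 0) mod int n" using xr by simp
  have "w1 p \<noteq> x p" "w2 p \<noteq> x p" "w1 p \<noteq> w2 p"
    unfolding w1_def w2_def mk_i
    using mod_small_neq[OF xr nn, of 0 1] mod_small_neq[OF xr nn, of 0 2] mod_small_neq[OF xr nn, of 1 2] e0
    by auto
  then have dist: "x \<noteq> w1" "x \<noteq> w2" "w1 \<noteq> w2" by auto
  show ?thesis unfolding good_def
  proof (intro conjI)
    show "?L \<subseteq> csr_verts m n" by (rule lineS_verts)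
    show "\<forall>u\<in>?L. \<forall>v\<in>?L. u \<noteq> v \<longrightarrow> csr_adj m u v" using line_clique pq by blast
    show "\<forall>v\<in>csr_verts m n. \<forall>y1\<in>?L. \<forall>y2\<in>?L. \<forall>y3\<in>?L. y1 \<noteq> y2 \<and> y1 \<noteq> y3 \<and> y2 \<noteq> y3 \<and>
        csr_adj m v y1 \<and> csr_adj m v y2 \<and> csr_adj m v y3 \<longrightarrow> v \<in> ?L"
      using line_U[OF pq] by blast
    show "\<exists>y1\<in>?L. \<exists>y2\<in>?L. \<exists>y3\<in>?L. y1 \<noteq> y2 \<and> y1 \<noteq> y3 \<and> y2 \<noteq> y3"
      using x1 w1 w2 dist by blast
  qed
qed

lemma aut_adj:
  assumes "csr_aut m n \<psi>" "x \<in> csr_verts m n" "y \<in> csr_verts m n"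
  shows "csr_adj m (\<psi> x) (\<psi> y) \<longleftrightarrow> csr_adj m x y"
  using assms by (auto simp: csr_aut_def)

lemma aut_inj: "csr_aut m n \<psi> \<Longrightarrow> inj_on \<psi> (csr_verts m n)"
  by (auto simp: csr_aut_def bij_betw_def)

lemma aut_img: "csr_aut m n \<psi> \<Longrightarrow> \<psi> ` csr_verts m n = csr_verts m n"
  by (auto simp: csr_aut_def bij_betw_def)

lemma good_image:
  assumes aut: "csr_aut m n \<psi>" and g: "good m n X"
  shows "good m n (\<psi> ` X)"
proof -
  let ?V = "csr_verts m n"
  have XV: "X \<subseteq> ?V" using g by (simp add: good_def)
  have inj: "inj_on \<psi> ?V" by (rule aut_inj[OF aut])
  have img: "\<psi> ` ?V = ?V" by (rule aut_img[OF aut])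
  have cl: "\<forall>u\<in>X. \<forall>v\<in>X. u \<noteq> v \<longrightarrow> csr_adj m u v" using g by (simp add: good_def)
  have U: "\<forall>v\<in>?V. \<forall>y1\<in>X. \<forall>y2\<in>X. \<forall>y3\<in>X. y1 \<noteq> y2 \<and> y1 \<noteq> y3 \<and> y2 \<noteq> y3 \<and>
        csr_adj m v y1 \<and> csr_adj m v y2 \<and> csr_adj m v y3 \<longrightarrow> v \<in> X" using g by (simp add: good_def)
  obtain z1 z2 z3 where z: "z1 \<in> X" "z2 \<in> X" "z3 \<in> X" "z1 \<noteq> z2" "z1 \<noteq> z3" "z2 \<noteq> z3"
    using g by (auto simp: good_def)
  have injX: "\<And>a b. a \<in> X \<Longrightarrow> b \<in> X \<Longrightarrow> \<psi> a = \<psi> b \<Longrightarrow> a = b"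
    using inj XV by (meson inj_onD subsetD)
  show ?thesis unfolding good_def
  proof (intro conjI)
    show "\<psi> ` X \<subseteq> ?V" using XV img by blast
    show "\<forall>u\<in>\<psi> ` X. \<forall>v\<in>\<psi> ` X. u \<noteq> v \<longrightarrow> csr_adj m u v"
    proof (intro ballI impI)
      fix u v assume "u \<in> \<psi> ` X" "v \<in> \<psi> ` X" "u \<noteq> v"
      then obtain a b where ab: "a \<in> X" "b \<in> X" "u = \<psi> a" "v = \<psi> b" by blast
      then have "a \<noteq> b" using \<open>u \<noteq> v\<close> by blast
      then have "csr_adj m a b" using cl ab by blast
      then show "csr_adj m u v" using aut_adj[OF aut] ab XV by blast
    qed
    show "\<forall>v\<in>?V. \<forall>y1\<in>\<psi> ` X. \<forall>y2\<in>\<psi> ` X. \<forall>y3\<in>\<psi> ` X. y1 \<noteq> y2 \<and> y1 \<noteq> y3 \<and> y2 \<noteq> y3 \<and>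
        csr_adj m v y1 \<and> csr_adj m v y2 \<and> csr_adj m v y3 \<longrightarrow> v \<in> \<psi> ` X"
    proof (intro ballI impI)
      fix v y1 y2 y3 assume v: "v \<in> ?V" and y: "y1 \<in> \<psi> ` X" "y2 \<in> \<psi> ` X" "y3 \<in> \<psi> ` X"
        and h: "y1 \<noteq> y2 \<and> y1 \<noteq> y3 \<and> y2 \<noteq> y3 \<and> csr_adj m v y1 \<and> csr_adj m v y2 \<and> csr_adj m v y3"
      obtain v0 where v0: "v0 \<in> ?V" "v = \<psi> v0" using v img by (metis imageE)
      obtain a1 a2 a3 where a: "a1 \<in> X" "a2 \<in> X" "a3 \<in> X" "y1 = \<psi> a1" "y2 = \<psi> a2" "y3 = \<psi> a3"
        using y by blast
      have "a1 \<noteq> a2" "a1 \<noteq> a3" "a2 \<noteq> a3" using h a by auto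
      moreover have "csr_adj m v0 a1" "csr_adj m v0 a2" "csr_adj m v0 a3"
        using h a v0 aut_adj[OF aut] XV by blast+
      ultimately have "v0 \<in> X" using U v0(1) a(1-3) by blast
      then show "v \<in> \<psi> ` X" using v0 by blast
    qed
    show "\<exists>y1\<in>\<psi> ` X. \<exists>y2\<in>\<psi> ` X. \<exists>y3\<in>\<psi> ` X. y1 \<noteq> y2 \<and> y1 \<noteq> y3 \<and> y2 \<noteq> y3"
      using z injX by blast
  qed
qed

lemma good_sub_line:
  assumes g: "good m n C" and pq: "p \<noteq> q" and sub: "C \<subseteq> lineS m n x {p,q}"
  shows "C = lineS m n x {p,q}"
proof (rule ccontr)
  assume "C \<noteq> lineS m n x {p,q}"
  then obtain v where v: "v \<in> lineS m n x {p,q}" "v \<notin> C" using sub by blast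
  obtain z1 z2 z3 where z: "z1 \<in> C" "z2 \<in> C" "z3 \<in> C" "z1 \<noteq> z2" "z1 \<noteq> z3" "z2 \<noteq> z3"
    using g by (auto simp: good_def)
  have "csr_adj m v z1" "csr_adj m v z2" "csr_adj m v z3"
    using line_clique[OF v(1) _ _ pq] z sub v(2) by blast+
  moreover have "v \<in> csr_verts m n" using v lineS_verts by blast
  ultimately have "v \<in> C" using g z unfolding good_def by blast
  then show False using v by blast
qed

lemma dset_sub: "dset m x y \<subseteq> {1..m}"
  by (auto simp: dset_def)

lemma star_pt:
  assumes x: "x \<in> csr_verts m n" and y: "y \<in> csr_verts m n" and dxy: "dset m x y = {a,b}"
    and ab: "a \<noteq> b" and d: "d \<in> {1..m}" and da: "d \<noteq> a" and db: "d \<noteq> b"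
  shows "mk n x a (y a) d \<in> csr_verts m n \<and> dset m x (mk n x a (y a) d) = {a,d} \<and>
         csr_adj m y (mk n x a (y a) d) \<and> csr_adj m x (mk n x a (y a) d)"
proof -
  let ?w = "mk n x a (y a) d"
  have a: "a \<in> {1..m}" "x a \<noteq> y a" using dxy by (auto simp: dset_def)
  have b: "b \<in> {1..m}" "x b \<noteq> y b" using dxy by (auto simp: dset_def)
  have yr: "0 \<le> y a" "y a < int n" using verts_in[OF y a(1)] by auto
  have wV: "?w \<in> csr_verts m n" by (rule mk_vert[OF x a(1) d da[symmetric] yr])
  have wd: "?w d \<noteq> x d" by (rule mk_j_neq[OF x a(1) d da[symmetric] yr]) (use a in auto)
  have dxw: "dset m x ?w = {a,d}"
  proof (rule antisym)
    show "dset m x ?w \<subseteq> {a,d}" by (rule mk_dset_sub)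
    show "{a,d} \<subseteq> dset m x ?w" using a d wd by (auto simp: dset_def mk_i)
  qed
  have "?w b = x b" using ab db by (intro mk_o) auto
  then have "y \<noteq> ?w" using b(2) by metis
  moreover have "dset m y ?w \<subseteq> {b,d}"
  proof
    fix i assume i: "i \<in> dset m y ?w"
    show "i \<in> {b,d}"
    proof (rule ccontr)
      assume nb: "i \<notin> {b,d}"
      show False
      proof (cases "i = a")
        case True then show False using i by (simp add: dset_def mk_i)
      next
        case False
        then have "i \<notin> dset m x y" using nb dxy by auto
        moreover have "i \<in> {1..m}" using i by (simp add: dset_def)
        ultimately have "y i = x i" by (auto simp: dset_def)
        then show False using i nb False by (simp add: dset_def mk_o)
      qed
    qed
  qed
  ultimately have "csr_adj m y ?w" using adj_of_sub[OF y wV] db by metis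
  moreover have "csr_adj m x ?w" using dxw da by (simp add: adj_dset)
  ultimately show ?thesis using wV dxw by blast
qed

lemma pattern:
  assumes g: "good m n C" and x: "x \<in> C"
  shows "(\<exists>p q. p \<noteq> q \<and> p \<in> {1..m} \<and> q \<in> {1..m} \<and> C = lineS m n x {p,q}) \<or>
         (\<exists>a\<in>{1..m}. \<forall>d\<in>{1..m}. d \<noteq> a \<longrightarrow> (\<exists>y\<in>C. dset m x y = {a,d}))"
proof -
  have CV: "C \<subseteq> csr_verts m n" using g by (simp add: good_def)
  have cl: "\<And>u v. u \<in> C \<Longrightarrow> v \<in> C \<Longrightarrow> u \<noteq> v \<Longrightarrow> csr_adj m u v" using g by (simp add: good_def)
  have U: "\<And>v y1 y2 y3. v \<in> csr_verts m n \<Longrightarrow> y1 \<in> C \<Longrightarrow> y2 \<in> C \<Longrightarrow> y3 \<in> C \<Longrightarrow> y1 \<noteq> y2 \<Longrightarrow> y1 \<noteq> y3 \<Longrightarrow> y2 \<noteq> y3 \<Longrightarrow>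
        csr_adj m v y1 \<Longrightarrow> csr_adj m v y2 \<Longrightarrow> csr_adj m v y3 \<Longrightarrow> v \<in> C" using g unfolding good_def by blast
  have xV: "x \<in> csr_verts m n" using x CV by blast
  show ?thesis
  proof (cases "\<forall>y1\<in>C. \<forall>y2\<in>C. y1 \<noteq> x \<longrightarrow> y2 \<noteq> x \<longrightarrow> dset m x y1 = dset m x y2")
    case True
    obtain z1 z2 z3 where z: "z1 \<in> C" "z2 \<in> C" "z3 \<in> C" "z1 \<noteq> z2" "z1 \<noteq> z3" "z2 \<noteq> z3"
      using g by (auto simp: good_def)
    obtain y0 where y0: "y0 \<in> C" "y0 \<noteq> x" using z by metis
    have "card (dset m x y0) = 2" using cl[OF x y0(1)] y0(2) by (simp add: adj_dset)
    then obtain p q where pq: "dset m x y0 = {p,q}" "p \<noteq> q" unfolding card_2_iff by blast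
    have pqm: "p \<in> {1..m}" "q \<in> {1..m}" using pq dset_sub by blast+
    have "C \<subseteq> lineS m n x {p,q}"
    proof
      fix y assume y: "y \<in> C"
      have "dset m x y \<subseteq> {p,q}"
      proof (cases "y = x")
        case True then show ?thesis by (simp add: dset_def)
      next
        case False
        then have "dset m x y = dset m x y0" using True y y0 by blast
        then show ?thesis using pq by simp
      qed
      then show "y \<in> lineS m n x {p,q}" using y CV by (auto intro: lineS_I)
    qed
    then have "C = lineS m n x {p,q}" by (rule good_sub_line[OF g pq(2)])
    then show ?thesis using pq pqm by blast
  next
    case False
    then obtain y1 y2 where y: "y1 \<in> C" "y2 \<in> C" "y1 \<noteq> x" "y2 \<noteq> x" "dset m x y1 \<noteq> dset m x y2"
      by blast
    have y12: "y1 \<noteq> y2" using y by blast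
    have yV: "y1 \<in> csr_verts m n" "y2 \<in> csr_verts m n" using y CV by blast+
    from tri[OF cl[OF x y(1) y(3)[symmetric]] cl[OF x y(2) y(4)[symmetric]] cl[OF y(1) y(2) y12]]
    obtain a b c where abc: "a \<noteq> b" "a \<noteq> c" "b \<noteq> c" "dset m x y1 = {a,b}" "dset m x y2 = {a,c}" "dset m y1 y2 = {b,c}"
      using y(5) by blast
    have am: "a \<in> {1..m}" using abc(4) dset_sub by blast
    have "a \<notin> dset m y1 y2" using abc by simp
    then have y12a: "y1 a = y2 a" using am by (auto simp: dset_def)
    have "\<forall>d\<in>{1..m}. d \<noteq> a \<longrightarrow> (\<exists>y\<in>C. dset m x y = {a,d})"
    proof (intro ballI impI)
      fix d assume d: "d \<in> {1..m}" "d \<noteq> a"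
      show "\<exists>y\<in>C. dset m x y = {a,d}"
      proof (cases "d = b \<or> d = c")
        case True then show ?thesis using y abc by blast
      next
        case False
        let ?w = "mk n x a (y1 a) d"
        have s1: "?w \<in> csr_verts m n \<and> dset m x ?w = {a,d} \<and> csr_adj m y1 ?w \<and> csr_adj m x ?w"
          by (rule star_pt[OF xV yV(1) abc(4) abc(1) d]) (use False in auto)
        have s2: "csr_adj m y2 ?w"
          using star_pt[OF xV yV(2) abc(5) abc(2) d] False y12a by auto
        have "?w \<in> C"
          by (rule U[of ?w x y1 y2]) (use s1 s2 x y adj_sym in auto)
        then show ?thesis using s1 by blast
      qed
    qed
    then show ?thesis using am by blast
  qed
qed

lemma star_contra:
  assumes gC: "good m n C" and gK: "good m n K" and xC: "x \<in> C" and xK: "x \<in> K"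
    and int: "C \<inter> K \<subseteq> {x}"
    and noedge: "\<forall>u\<in>C. \<forall>w\<in>K. u \<noteq> x \<longrightarrow> w \<noteq> x \<longrightarrow> \<not> csr_adj m u w"
    and a: "a \<in> {1..m}" and star: "\<forall>d\<in>{1..m}. d \<noteq> a \<longrightarrow> (\<exists>y\<in>C. dset m x y = {a,d})"
    and m2: "m \<ge> 2"
  shows False
proof -
  have CV: "C \<subseteq> csr_verts m n" using gC by (simp add: good_def)
  have KV: "K \<subseteq> csr_verts m n" using gK by (simp add: good_def)
  have xV: "x \<in> csr_verts m n" using xC CV by blast
  have dxx: "dset m x x = {}" by (simp add: dset_def)
  from pattern[OF gK xK] show False
  proof
    assume "\<exists>p q. p \<noteq> q \<and> p \<in> {1..m} \<and> q \<in> {1..m} \<and> K = lineS m n x {p,q}"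
    then obtain p q where pq: "p \<noteq> q" "p \<in> {1..m}" "q \<in> {1..m}" "K = lineS m n x {p,q}" by (elim exE conjE) simp
    show False
    proof (cases "a = p \<or> a = q")
      case True
      have "\<exists>y\<in>C. dset m x y = {p,q}"
      proof (cases "a = p")
        case True
        have "q \<noteq> a" using True pq(1) by simp
        then have "\<exists>y\<in>C. dset m x y = {a,q}" using star pq(3) by simp
        then show ?thesis using True by simp
      next
        case False
        then have aq: "a = q" using \<open>a = p \<or> a = q\<close> by simp
        have "p \<noteq> a" using False by simp
        then have "\<exists>y\<in>C. dset m x y = {a,p}" using star pq(2) by simp
        moreover have "{a,p} = {p,q}" using aq by (simp add: insert_commute)
        ultimately show ?thesis by simp
      qed
      then obtain y where y: "y \<in> C" "dset m x y = {p,q}" by blast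
      have "y \<in> lineS m n x {p,q}" using y CV by (intro lineS_I) auto
      then have "y \<in> K" using pq(4) by simp
      then have "y = x" using y int by blast
      then show False using y dxx by simp
    next
      case False
      have "p \<noteq> a" using False by simp
      then have "\<exists>y\<in>C. dset m x y = {a,p}" using star pq(2) by simp
      then obtain y where y: "y \<in> C" "dset m x y = {a,p}" by blast
      have yV: "y \<in> csr_verts m n" using y CV by blast
      have s: "mk n x p (y p) q \<in> csr_verts m n \<and> dset m x (mk n x p (y p) q) = {p,q} \<and>
         csr_adj m y (mk n x p (y p) q) \<and> csr_adj m x (mk n x p (y p) q)"
      proof -
        have y2: "dset m x y = {p,a}" using y(2) by blast
        have "p \<noteq> a" "q \<noteq> p" "q \<noteq> a" using False pq(1) by auto
        then show ?thesis by (rule star_pt[OF xV yV y2 _ pq(3)])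
      qed
      have "mk n x p (y p) q \<in> lineS m n x {p,q}" using s by (intro lineS_I) auto
      then have wK: "mk n x p (y p) q \<in> K" using pq(4) by simp
      have wx: "mk n x p (y p) q \<noteq> x"
      proof
        assume "mk n x p (y p) q = x"
        then have "dset m x x = {p,q}" using s by simp
        then show False using dxx by simp
      qed
      have yx: "y \<noteq> x"
      proof
        assume "y = x"
        then have "dset m x x = {a,p}" using y by simp
        then show False using dxx by simp
      qed
      have "csr_adj m y (mk n x p (y p) q)" using s by blast
      then show False using noedge y(1) wK wx yx by blast
    qed
  next
    assume "\<exists>a'\<in>{1..m}. \<forall>d\<in>{1..m}. d \<noteq> a' \<longrightarrow> (\<exists>z\<in>K. dset m x z = {a',d})"
    then obtain a' where a': "a' \<in> {1..m}" "\<forall>d\<in>{1..m}. d \<noteq> a' \<longrightarrow> (\<exists>z\<in>K. dset m x z = {a',d})"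
      by blast
    have "\<exists>e. e \<in> {1..m} \<and> e \<noteq> a \<and> (\<exists>y\<in>C. dset m x y = {a,e}) \<and> (\<exists>z\<in>K. dset m x z = {a,e})"
    proof (cases "a' = a")
      case True
      have "\<exists>e. e \<in> {1..m} \<and> e \<noteq> a"
      proof (cases "a = 1")
        case True then show ?thesis using m2 by (intro exI[of _ 2]) auto
      next
        case False then show ?thesis using m2 by (intro exI[of _ 1]) auto
      qed
      then obtain e where e: "e \<in> {1..m}" "e \<noteq> a" by blast
      have "\<exists>y\<in>C. dset m x y = {a,e}" using star e by simp
      moreover have "\<exists>z\<in>K. dset m x z = {a',e}" using a'(2) e True by simp
      ultimately show ?thesis using e True by auto
    next
      case False
      have "\<exists>z\<in>K. dset m x z = {a',a}" using a'(2) a False by simp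
      moreover have "{a',a} = {a,a'}" by (simp add: insert_commute)
      ultimately have "\<exists>z\<in>K. dset m x z = {a,a'}" by simp
      moreover have "\<exists>y\<in>C. dset m x y = {a,a'}" using star a'(1) False by simp
      ultimately show ?thesis using a'(1) False by auto
    qed
    then obtain e where e: "e \<in> {1..m}" "e \<noteq> a" "\<exists>y\<in>C. dset m x y = {a,e}" "\<exists>z\<in>K. dset m x z = {a,e}"
      by blast
    obtain y z where yz: "y \<in> C" "z \<in> K" "dset m x y = {a,e}" "dset m x z = {a,e}" using e by blast
    have "y \<noteq> x" "z \<noteq> x" using yz dxx by auto
    show False
    proof (cases "y = z")
      case True then show False using yz int \<open>y \<noteq> x\<close> by blast
    next
      case False
      have yl: "y \<in> lineS m n x {a,e}" and zl: "z \<in> lineS m n x {a,e}" using yz CV KV by (auto intro: lineS_I)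
      have "csr_adj m y z" by (rule line_clique[OF yl zl False e(2)[symmetric]])
      then show False using noedge yz \<open>y \<noteq> x\<close> \<open>z \<noteq> x\<close> by blast
    qed
  qed
qed

lemma vert_mod:
  assumes x: "x \<in> csr_verts m n" shows "x i mod int n = x i"
proof (cases "i \<in> {1..m}")
  case True
  then show ?thesis using verts_in[OF x True] by simp
next
  case False
  then show ?thesis using verts_out[OF x False] by simp
qed

lemma vtrans_line:
  assumes x: "x \<in> csr_verts m n" and a: "a \<in> {1..m}" and b: "b \<in> {1..m}" and ab: "a \<noteq> b" and n: "n > 0"
  shows "vtrans n x (S_line n a b) = lineS m n x {a,b}"
proof
  show "vtrans n x (S_line n a b) \<subseteq> lineS m n x {a,b}"
  proof
    fix w assume "w \<in> vtrans n x (S_line n a b)"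
    then obtain \<alpha> where al: "0 \<le> \<alpha>" "\<alpha> < int n"
      and w: "w = vadd n x (\<lambda>i. (\<alpha> * (unitv a i - unitv b i)) mod int n)"
      unfolding vtrans_def S_line_def by auto
    have vr: "0 \<le> (x a + \<alpha>) mod int n" "(x a + \<alpha>) mod int n < int n" using n by simp_all
    have "w = mk n x a ((x a + \<alpha>) mod int n) b"
    proof
      fix i
      show "w i = mk n x a ((x a + \<alpha>) mod int n) b i"
      proof (cases "i = a")
        case True then show ?thesis using ab by (simp add: w vadd_def unitv_def mk_def mod_add_right_eq)
      next
        case False
        note ia = False
        show ?thesis
        proof (cases "i = b")
          case True
          have "(x b + (\<alpha> * (unitv a b - unitv b b)) mod int n) mod int n = (x b - \<alpha>) mod int n"
            using ab by (simp add: unitv_def mod_add_right_eq)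
          moreover have "(x b + x a - (x a + \<alpha>) mod int n) mod int n = (x b - \<alpha>) mod int n"
            by (simp add: mod_diff_right_eq)
          ultimately show ?thesis using True ab by (simp add: w vadd_def mk_def)
        next
          case False
          then show ?thesis using ia vert_mod[OF x] by (simp add: w vadd_def unitv_def mk_def)
        qed
      qed
    qed
    moreover have "mk n x a ((x a + \<alpha>) mod int n) b \<in> lineS m n x {a,b}"
      by (rule lineS_I[OF mk_vert[OF x a b ab vr] mk_dset_sub])
    ultimately show "w \<in> lineS m n x {a,b}" by simp
  qed
next
  show "lineS m n x {a,b} \<subseteq> vtrans n x (S_line n a b)"
  proof
    fix y assume y: "y \<in> lineS m n x {a,b}"
    have yV: "y \<in> csr_verts m n" using y lineS_verts by blast
    have agree: "\<And>i. i \<noteq> a \<Longrightarrow> i \<noteq> b \<Longrightarrow> y i = x i"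
    proof -
      fix i assume "i \<noteq> a" "i \<noteq> b"
      show "y i = x i"
      proof (cases "i \<in> {1..m}")
        case True
        then have "i \<notin> dset m x y" using lineS_dset[OF y] \<open>i \<noteq> a\<close> \<open>i \<noteq> b\<close> by blast
        then show ?thesis using True by (simp add: dset_def)
      next
        case False then show ?thesis using verts_out[OF x] verts_out[OF yV] by simp
      qed
    qed
    have s: "(\<Sum>k=1..m. y k) = (\<Sum>k=1..m. x k) + (y a - x a) + (y b - x b)"
      using a b ab agree by (intro sum_two_change) auto
    have "((y a - x a) + (y b - x b)) mod int n = 0"
    proof -
      have "((\<Sum>k=1..m. x k) + ((y a - x a) + (y b - x b))) mod int n = 0"
        using s verts_sum[OF yV] by (simp add: add.assoc)
      moreover have "((\<Sum>k=1..m. x k) + ((y a - x a) + (y b - x b))) mod int n =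
          ((\<Sum>k=1..m. x k) mod int n + ((y a - x a) + (y b - x b))) mod int n"
        by (simp add: mod_add_left_eq)
      ultimately show ?thesis using verts_sum[OF x] by simp
    qed
    then have dv: "int n dvd ((y a - x a) + (y b - x b))" by (simp add: dvd_eq_mod_eq_0)
    define \<alpha> where "\<alpha> = (y a - x a) mod int n"
    have al: "0 \<le> \<alpha>" "\<alpha> < int n" using n by (simp_all add: \<alpha>_def)
    have "y = vadd n x (\<lambda>i. (\<alpha> * (unitv a i - unitv b i)) mod int n)"
    proof
      fix i
      show "y i = vadd n x (\<lambda>i. (\<alpha> * (unitv a i - unitv b i)) mod int n) i"
      proof (cases "i = a")
        case True
        have "(x a + \<alpha> mod int n) mod int n = (x a + (y a - x a)) mod int n"
          by (simp add: \<alpha>_def mod_add_right_eq)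
        then show ?thesis using True ab vert_mod[OF yV, of a] by (simp add: vadd_def unitv_def)
      next
        case False
        note ia = False
        show ?thesis
        proof (cases "i = b")
          case True
          have "(x b + (- \<alpha>) mod int n) mod int n = (x b - (y a - x a)) mod int n"
            by (simp add: \<alpha>_def mod_add_right_eq mod_diff_right_eq)
          also have "\<dots> = y b mod int n"
          proof -
            have e: "x b - (y a - x a) - y b = - ((y a - x a) + (y b - x b))" by simp
            have "int n dvd (x b - (y a - x a) - y b)" unfolding e using dv by (simp only: dvd_minus_iff)
            then show ?thesis by (simp add: mod_eq_dvd_iff)
          qed
          also have "\<dots> = y b" by (rule vert_mod[OF yV])
          finally show ?thesis using True ab by (simp add: vadd_def unitv_def)
        next
          case False
          then show ?thesis using ia agree vert_mod[OF x] by (simp add: vadd_def unitv_def)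
        qed
      qed
    qed
    moreover have "(\<lambda>i. (\<alpha> * (unitv a i - unitv b i)) mod int n) \<in> S_line n a b"
      unfolding S_line_def using al by (intro CollectI exI[of _ \<alpha>]) simp
    ultimately show "y \<in> vtrans n x (S_line n a b)"
      unfolding vtrans_def by (intro CollectI exI[of _ "\<lambda>i. (\<alpha> * (unitv a i - unitv b i)) mod int n"]) simp
  qed
qed

lemma two_of_card:
  assumes cs: "card (S::nat set) \<ge> 2"
  shows "\<exists>c d. c \<in> S \<and> d \<in> S \<and> c \<noteq> d"
proof -
  have f: "finite S" using cs by (intro card_ge_0_finite) linarith
  have "card S \<noteq> 0" using cs by linarith
  then have "S \<noteq> {}" by (metis card.empty)
  then obtain c where c: "c \<in> S" by blast
  have "card (S - {c}) = card S - 1" using f c by (simp add: card_Diff_singleton)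
  then have "card (S - {c}) \<noteq> 0" using cs by linarith
  then have "S - {c} \<noteq> {}" by (metis card.empty)
  then obtain d where d: "d \<in> S - {c}" by blast
  show ?thesis using c d by blast
qed

lemma two_others:
  fixes a b :: nat
  assumes m: "m > 3" and a: "a \<in> {1..m}" and b: "b \<in> {1..m}"
  shows "\<exists>c d. c \<in> {1..m} \<and> d \<in> {1..m} \<and> c \<noteq> d \<and> c \<noteq> a \<and> c \<noteq> b \<and> d \<noteq> a \<and> d \<noteq> b"
proof -
  define S where "S = {1..(4::nat)} - {a,b}"
  have "card S \<ge> card {1..(4::nat)} - card {a,b}" unfolding S_def by (rule diff_card_le_card_Diff) simp
  moreover have "card {a,b} \<le> 2" by (simp add: card_insert_le_m1)
  ultimately have "card S \<ge> 2" by simp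
  then obtain c d where "c \<in> S" "d \<in> S" "c \<noteq> d" using two_of_card by blast
  then show ?thesis using m unfolding S_def by (intro exI[of _ c] exI[of _ d]) auto
qed

theorem lemma3:
  fixes m n :: nat and \<psi> :: "(nat \<Rightarrow> int) \<Rightarrow> (nat \<Rightarrow> int)"
  assumes "n > 3" and "m > 3" and "csr_aut m n \<psi>"
    and "\<xi> \<in> csr_verts m n" and "a \<in> {1..m}" and "b \<in> {1..m}" and "a \<noteq> b"
  shows "\<exists>\<sigma>\<in>csr_verts m n. \<exists>p\<in>{1..m}. \<exists>q\<in>{1..m}. p \<noteq> q \<and>
           \<psi> ` vtrans n \<xi> (S_line n a b) = vtrans n \<sigma> (S_line n p q)"
proof -
  note n = assms(1) and m = assms(2) and aut = assms(3) and xi = assms(4) and a = assms(5) and b = assms(6) and ab = assms(7)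
  let ?V = "csr_verts m n"
  obtain c d where cd: "c \<in> {1..m}" "d \<in> {1..m}" "c \<noteq> d" "c \<noteq> a" "c \<noteq> b" "d \<noteq> a" "d \<noteq> b"
    using two_others[OF m a b] by blast
  define L where "L = lineS m n \<xi> {a,b}"
  define K where "K = lineS m n \<xi> {c,d}"
  have n3: "n \<ge> 3" using n by simp
  have gL: "good m n L" unfolding L_def by (rule good_line[OF xi a b ab n3])
  have gK: "good m n K" unfolding K_def by (rule good_line[OF xi cd(1,2,3) n3])
  have xiL: "\<xi> \<in> L" unfolding L_def using xi by (intro lineS_I) (auto simp: dset_def)
  have xiK: "\<xi> \<in> K" unfolding K_def using xi by (intro lineS_I) (auto simp: dset_def)
  have LV: "L \<subseteq> ?V" "K \<subseteq> ?V" unfolding L_def K_def by (rule lineS_verts)+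
  have LK: "L \<inter> K \<subseteq> {\<xi>}"
  proof
    fix y assume y: "y \<in> L \<inter> K"
    have "dset m \<xi> y \<subseteq> {a,b}" "dset m \<xi> y \<subseteq> {c,d}" using y lineS_dset unfolding L_def K_def by blast+
    then have "dset m \<xi> y = {}" using cd by blast
    then have "\<xi> = y" using vert_eq[OF xi] y LV by blast
    then show "y \<in> {\<xi>}" by simp
  qed
  have noLK: "\<And>l k. l \<in> L \<Longrightarrow> k \<in> K \<Longrightarrow> l \<noteq> \<xi> \<Longrightarrow> k \<noteq> \<xi> \<Longrightarrow> \<not> csr_adj m l k"
  proof
    fix l k assume l: "l \<in> L" and k: "k \<in> K" and lx: "l \<noteq> \<xi>" and kx: "k \<noteq> \<xi>" and adj: "csr_adj m l k"
    have dl: "dset m \<xi> l = {a,b}" using line_dset_eq[OF xiL[unfolded L_def] l[unfolded L_def] lx[symmetric] ab] .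
    have dk: "dset m \<xi> k = {c,d}" using line_dset_eq[OF xiK[unfolded K_def] k[unfolded K_def] kx[symmetric] cd(3)] .
    have a1: "csr_adj m \<xi> l" using dl ab by (simp add: adj_dset)
    have a2: "csr_adj m \<xi> k" using dk cd(3) by (simp add: adj_dset)
    from tri[OF a1 a2 adj] show False
    proof
      assume "dset m \<xi> l = dset m \<xi> k \<and> dset m l k = dset m \<xi> l"
      then have "{a,b} = {c,d}" using dl dk by simp
      then show False using cd by (auto simp: doubleton_eq_iff)
    next
      assume "\<exists>a' b' c'. a' \<noteq> b' \<and> a' \<noteq> c' \<and> b' \<noteq> c' \<and> dset m \<xi> l = {a', b'} \<and> dset m \<xi> k = {a', c'} \<and> dset m l k = {b', c'}"
      then obtain a' b' c' where "dset m \<xi> l = {a', b'}" "dset m \<xi> k = {a', c'}" by blast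
      then have "a' \<in> {a,b}" "a' \<in> {c,d}" using dl dk by blast+
      then show False using cd by blast
    qed
  qed
  define C where "C = \<psi> ` L"
  define K' where "K' = \<psi> ` K"
  define x where "x = \<psi> \<xi>"
  have gC: "good m n C" unfolding C_def by (rule good_image[OF aut gL])
  have gK': "good m n K'" unfolding K'_def by (rule good_image[OF aut gK])
  have xC: "x \<in> C" unfolding x_def C_def using xiL by blast
  have xK': "x \<in> K'" unfolding x_def K'_def using xiK by blast
  have inj: "inj_on \<psi> ?V" by (rule aut_inj[OF aut])
  have xV: "x \<in> ?V" unfolding x_def using aut_img[OF aut] xi by blast
  have CK: "C \<inter> K' \<subseteq> {x}"
  proof
    fix u assume "u \<in> C \<inter> K'"
    then obtain l k where lk: "l \<in> L" "k \<in> K" "u = \<psi> l" "u = \<psi> k" unfolding C_def K'_def by blast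
    then have "l = k" using inj LV by (metis inj_onD subsetD)
    then have "l = \<xi>" using lk LK by blast
    then show "u \<in> {x}" using lk x_def by simp
  qed
  have noCK: "\<forall>u\<in>C. \<forall>w\<in>K'. u \<noteq> x \<longrightarrow> w \<noteq> x \<longrightarrow> \<not> csr_adj m u w"
  proof (intro ballI impI)
    fix u w assume u: "u \<in> C" and w: "w \<in> K'" and ux: "u \<noteq> x" and wx: "w \<noteq> x"
    obtain l where l: "l \<in> L" "u = \<psi> l" using u C_def by blast
    obtain k where k: "k \<in> K" "w = \<psi> k" using w K'_def by blast
    have "l \<noteq> \<xi>" "k \<noteq> \<xi>" using l k ux wx x_def by auto
    then have "\<not> csr_adj m l k" using noLK l k by blast
    then show "\<not> csr_adj m u w" using aut_adj[OF aut] l k LV by blast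
  qed
  have vL: "vtrans n \<xi> (S_line n a b) = L" unfolding L_def using vtrans_line[OF xi a b ab] n by simp
  from pattern[OF gC xC] show ?thesis
  proof
    assume "\<exists>p q. p \<noteq> q \<and> p \<in> {1..m} \<and> q \<in> {1..m} \<and> C = lineS m n x {p,q}"
    then obtain p q where pq: "p \<noteq> q" "p \<in> {1..m}" "q \<in> {1..m}" "C = lineS m n x {p,q}"
      by (elim exE conjE) simp
    have "\<psi> ` vtrans n \<xi> (S_line n a b) = vtrans n x (S_line n p q)"
      using vL C_def pq vtrans_line[OF xV pq(2) pq(3) pq(1)] n by simp
    then show ?thesis using xV pq by blast
  next
    assume "\<exists>a\<in>{1..m}. \<forall>d\<in>{1..m}. d \<noteq> a \<longrightarrow> (\<exists>y\<in>C. dset m x y = {a,d})"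
    then obtain a0 where a0: "a0 \<in> {1..m}" "\<forall>d\<in>{1..m}. d \<noteq> a0 \<longrightarrow> (\<exists>y\<in>C. dset m x y = {a0,d})"
      by blast
    have "m \<ge> 2" using m by simp
    then have False by (rule star_contra[OF gC gK' xC xK' CK noCK a0])
    then show ?thesis ..
  qed
qed

end
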